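(* Let $l,n$ be positive integers, $\mathbf{x}_1,\dots,\mathbf{x}_l\in\mathbb{R}^n$, $y_1,\dots,y_l\in\mathbb{R}$, $a_1,\dots,a_l,b_1,\dots,b_l\in\mathbb{R}$. Let $\varphi:\mathbb{R}\to[0,\infty)$ be nonconstant, continuous and sublinear, with $\varphi^*=\iota_{[\alpha,\beta]}$, $\alpha<\beta$. For $C>0$ let $\mathbf w^*(C)$ be the optimal solution of $$\min_{\mathbf w\in\mathbb{R}^n}\tfrac12\|\mathbf w\|^2+C\sum_{i=1}^l\varphi\big(\mathbf w^T(a_i\mathbf x_i)+b_iy_i\big),$$ and let $\theta^*(C)$ be an optimal solution of the dual problem $\min_{\theta\in[\alpha,\beta]^l}\frac{C}{2}\|\mathbf Z^T\theta\|^2-\langle\bar{\mathbf y},\theta\rangle$, where $\mathbf Z\in\mathbb{R}^{l\times n}$ has $i$-th row $a_i\mathbf x_i^T$ and $\bar{\mathbf y}=(b_1y_1,\dots,b_ly_l)^T$. Let $0<C_1<\dots<C_{\mathcal K}$ and suppose $\mathbf w^*(C_k)$ is known for some integer $1\le k<\mathcal K$. If $$-\tfrac{C_k+C_{k+1}}{2C_k}\langle\mathbf w^*(C_k),a_i\mathbf x_i\rangle-\tfrac{C_{k+1}-C_k}{2C_k}\|\mathbf w^*(C_k)\|\,\|a_i\mathbf x_i\|>b_iy_i,$$ then $[\theta^*(C_{k+1})]_i=\alpha$, i.e., $i\in\mathcal R$ (at $C=C_{k+1}$). Similarly, if $$-\tfrac{C_k+C_{k+1}}{2C_k}\langle\mathbf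 w^*(C_k),a_i\mathbf x_i\rangle+\tfrac{C_{k+1}-C_k}{2C_k}\|\mathbf w^*(C_k)\|\,\|a_i\mathbf x_i\|<b_iy_i,$$ then $[\theta^*(C_{k+1})]_i=\beta$, i.e., $i\in\mathcal L$.
   Context: Sublinear means convex and $\varphi(tx)=t\varphi(x)$ for $t>0$; $\varphi^*(s)=\sup_t(st-\varphi(t))$; $\iota_{[\alpha,\beta]}$ is $0$ on $[\alpha,\beta]$ and $+\infty$ elsewhere. Primal and dual solutions satisfy $\mathbf w^*(C)=-C\mathbf Z^T\theta^*(C)$. At parameter $C$: $\mathcal R=\{i:-\langle\mathbf w^*(C),a_i\mathbf x_i\rangle>b_iy_i\}$, $\mathcal L=\{i:-\langle\mathbf w^*(C),a_i\mathbf x_i\rangle<b_iy_i\}$. *)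

theory Defs
  imports "HOL-Analysis.Analysis"
begin

definition sublinear :: "(real \<Rightarrow> real) \<Rightarrow> bool" where
  "sublinear \<phi> \<longleftrightarrow> convex_on UNIV \<phi> \<and> (\<forall>t>0. \<forall>x. \<phi> (t * x) = t * \<phi> x)"

definition fconj :: "(real \<Rightarrow> real) \<Rightarrow> real \<Rightarrow> ereal" where
  "fconj \<phi> s = (SUP t. ereal (s * t - \<phi> t))"

definition iota_interval :: "real \<Rightarrow> real \<Rightarrow> real \<Rightarrow> ereal" where
  "iota_interval \<alpha> \<beta> s = (if \<alpha> \<le> s \<and> s \<le> \<beta> then 0 else \<infinity>)"

definition primal_obj ::
  "(real \<Rightarrow> real) \<Rightarrow> ('l::finite \<Rightarrow> real) \<Rightarrow> ('l \<Rightarrow> real^'n) \<Rightarrow> ('l \<Rightarrow> real) \<Rightarrow> ('l \<Rightarrow> real)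
    \<Rightarrow> real \<Rightarrow> real^'n \<Rightarrow> real" where
  "primal_obj \<phi> a x b y C w =
     (1/2) * (norm w)^2 + C * (\<Sum>i\<in>UNIV. \<phi> (w \<bullet> (a i *\<^sub>R x i) + b i * y i))"

definition primal_opt ::
  "(real \<Rightarrow> real) \<Rightarrow> ('l::finite \<Rightarrow> real) \<Rightarrow> ('l \<Rightarrow> real^'n) \<Rightarrow> ('l \<Rightarrow> real) \<Rightarrow> ('l \<Rightarrow> real)
    \<Rightarrow> real \<Rightarrow> real^'n \<Rightarrow> bool" where
  "primal_opt \<phi> a x b y C w \<longleftrightarrow> (\<forall>v. primal_obj \<phi> a x b y C w \<le> primal_obj \<phi> a x b y C v)"

definition ZT :: "('l::finite \<Rightarrow> real) \<Rightarrow> ('l \<Rightarrow> real^'n) \<Rightarrow> ('l \<Rightarrow> real) \<Rightarrow> real^'n" where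
  "ZT a x \<theta> = (\<Sum>i\<in>UNIV. \<theta> i *\<^sub>R (a i *\<^sub>R x i))"

definition dual_obj ::
  "('l::finite \<Rightarrow> real) \<Rightarrow> ('l \<Rightarrow> real^'n) \<Rightarrow> ('l \<Rightarrow> real) \<Rightarrow> ('l \<Rightarrow> real)
    \<Rightarrow> real \<Rightarrow> ('l \<Rightarrow> real) \<Rightarrow> real" where
  "dual_obj a x b y C \<theta> = C / 2 * (norm (ZT a x \<theta>))^2 - (\<Sum>i\<in>UNIV. b i * y i * \<theta> i)"

definition dual_opt ::
  "real \<Rightarrow> real \<Rightarrow> ('l::finite \<Rightarrow> real) \<Rightarrow> ('l \<Rightarrow> real^'n) \<Rightarrow> ('l \<Rightarrow> real) \<Rightarrow> ('l \<Rightarrow> real)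
    \<Rightarrow> real \<Rightarrow> ('l \<Rightarrow> real) \<Rightarrow> bool" where
  "dual_opt \<alpha> \<beta> a x b y C \<theta> \<longleftrightarrow>
     (\<forall>i. \<alpha> \<le> \<theta> i \<and> \<theta> i \<le> \<beta>) \<and>
     (\<forall>\<eta>. (\<forall>i. \<alpha> \<le> \<eta> i \<and> \<eta> i \<le> \<beta>) \<longrightarrow> dual_obj a x b y C \<theta> \<le> dual_obj a x b y C \<eta>)"

definition idx_R :: "('l \<Rightarrow> real) \<Rightarrow> ('l \<Rightarrow> real^'n) \<Rightarrow> ('l \<Rightarrow> real) \<Rightarrow> ('l \<Rightarrow> real) \<Rightarrow> real^'n \<Rightarrow> 'l set" where
  "idx_R a x b y w = {i. - (w \<bullet> (a i *\<^sub>R x i)) > b i * y i}"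

definition idx_L :: "('l \<Rightarrow> real) \<Rightarrow> ('l \<Rightarrow> real^'n) \<Rightarrow> ('l \<Rightarrow> real) \<Rightarrow> ('l \<Rightarrow> real) \<Rightarrow> real^'n \<Rightarrow> 'l set" where
  "idx_L a x b y w = {i. - (w \<bullet> (a i *\<^sub>R x i)) < b i * y i}"

end

theory Submission
  imports Defs
begin

lemma ZT_upd: "ZT a x (\<theta>(i := \<theta> i + e)) = ZT a x \<theta> + e *\<^sub>R (a i *\<^sub>R x i)"
proof -
  have "(\<theta>(i := \<theta> i + e)) j = \<theta> j + (if j = i then e else 0)" for j by auto
  hence "ZT a x (\<theta>(i := \<theta> i + e)) = (\<Sum>j\<in>UNIV. \<theta> j *\<^sub>R (a j *\<^sub>R x j) + (if j = i then e else 0) *\<^sub>R (a j *\<^sub>R x j))"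
    unfolding ZT_def by (intro sum.cong) (auto simp del: fun_upd_apply simp: scaleR_add_left algebra_simps)
  also have "\<dots> = ZT a x \<theta> + (\<Sum>j\<in>UNIV. if j = i then e *\<^sub>R (a i *\<^sub>R x i) else 0)"
    unfolding ZT_def sum.distrib by (intro arg_cong2[where f="(+)"] refl sum.cong) auto
  also have "\<dots> = ZT a x \<theta> + e *\<^sub>R (a i *\<^sub>R x i)" by simp
  finally show ?thesis .
qed

lemma sum_upd: "(\<Sum>j\<in>(UNIV::'l::finite set). (c j::real) * (\<theta>(i := \<theta> i + e)) j) = (\<Sum>j\<in>UNIV. c j * \<theta> j) + c i * e"
proof -
  have "(\<theta>(i := \<theta> i + e)) j = \<theta> j + (if j = i then e else 0)" for j by auto
  have "c j * (\<theta>(i := \<theta> i + e)) j = c j * \<theta> j + (if j = i then c j * e else 0)" for j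
    by (cases "j = i") (simp_all add: distrib_left)
  hence "(\<Sum>j\<in>(UNIV::'l set). c j * (\<theta>(i := \<theta> i + e)) j) = (\<Sum>j\<in>UNIV. c j * \<theta> j + (if j = i then c j * e else 0))"
    by (intro sum.cong refl) (simp del: fun_upd_apply)
  thus ?thesis by (simp add: sum.distrib)
qed

lemma dual_upd:
  "dual_obj a x b y C (\<theta>(i := \<theta> i + e)) = dual_obj a x b y C \<theta>
     + e * (C * (ZT a x \<theta> \<bullet> (a i *\<^sub>R x i)) - b i * y i) + C / 2 * e^2 * (norm (a i *\<^sub>R x i))^2"
proof -
  have c: "x i \<bullet> ZT a x \<theta> = ZT a x \<theta> \<bullet> x i" by (rule inner_commute)
  show ?thesis
  unfolding dual_obj_def ZT_upd sum_upd[of "\<lambda>j. b j * y j"] power2_norm_eq_inner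
  by (simp add: inner_add_left inner_add_right c algebra_simps power2_eq_square)
qed

lemma quad_neg:
  fixes g A d :: real
  assumes "d > 0" "A \<ge> 0" "\<forall>e. 0 < e \<and> e \<le> d \<longrightarrow> 0 \<le> e * g + A * e^2"
  shows "g \<ge> 0"
proof (rule ccontr)
  assume "\<not> g \<ge> 0" hence g: "g < 0" by simp
  define e where "e = min d (-g/(A+1))"
  have "A + 1 > 0" using assms by simp
  hence e0: "e > 0" using g assms by (auto simp: e_def divide_neg_pos)
  have "e \<le> (-g)/(A+1)" by (simp add: e_def)
  hence "e * (A+1) \<le> -g" using \<open>A + 1 > 0\<close> by (simp only: pos_le_divide_eq)
  hence "A * e < -g" using e0 by (simp add: algebra_simps)
  hence "g + A * e < 0" by simp
  hence "e * (g + A*e) < 0" using e0 by (simp add: mult_pos_neg)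
  moreover have "0 \<le> e * g + A * e^2" using assms(3) e0 by (auto simp: e_def)
  ultimately show False by (simp add: algebra_simps power2_eq_square)
qed

lemma kkt_coord:
  fixes i
  assumes opt: "dual_opt \<alpha> \<beta> a x b y C \<theta>" and C: "C > 0"
  defines "u \<equiv> (- C *\<^sub>R ZT a x \<theta>) \<bullet> (a i *\<^sub>R x i) + b i * y i"
  shows "(u > 0 \<longrightarrow> \<theta> i = \<beta>) \<and> (u < 0 \<longrightarrow> \<theta> i = \<alpha>)"
proof -
  define A where "A = C/2 * (norm (a i *\<^sub>R x i))^2"
  define g where "g = C * (ZT a x \<theta> \<bullet> (a i *\<^sub>R x i)) - b i * y i"
  have A0: "A \<ge> 0" using C by (simp add: A_def)
  have ug: "u = - g" by (simp add: u_def g_def)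
  have box: "\<forall>j. \<alpha> \<le> \<theta> j \<and> \<theta> j \<le> \<beta>" using opt by (simp add: dual_opt_def)
  have bi: "\<alpha> \<le> \<theta> i" "\<theta> i \<le> \<beta>" using box by auto
  have key: "0 \<le> e * g + A * e^2" if "\<alpha> \<le> \<theta> i + e" "\<theta> i + e \<le> \<beta>" for e
  proof -
    have "\<forall>j. \<alpha> \<le> (\<theta>(i := \<theta> i + e)) j \<and> (\<theta>(i := \<theta> i + e)) j \<le> \<beta>" using box that by auto
    hence "dual_obj a x b y C \<theta> \<le> dual_obj a x b y C (\<theta>(i := \<theta> i + e))" using opt by (simp add: dual_opt_def)
    thus ?thesis unfolding dual_upd g_def A_def by (simp add: algebra_simps)
  qed
  show ?thesis
  proof safe
    assume "u > 0"
    show "\<theta> i = \<beta>"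
    proof (rule ccontr)
      assume "\<theta> i \<noteq> \<beta>" hence "\<theta> i < \<beta>" using bi by auto
      have "g \<ge> 0"
        by (rule quad_neg[of "\<beta> - \<theta> i" A]) (use \<open>\<theta> i < \<beta>\<close> A0 bi in \<open>auto intro!: key\<close>)
      thus False using \<open>u > 0\<close> ug by simp
    qed
  next
    assume "u < 0"
    show "\<theta> i = \<alpha>"
    proof (rule ccontr)
      assume "\<theta> i \<noteq> \<alpha>" hence "\<alpha> < \<theta> i" using bi by auto
      have "-g \<ge> 0"
      proof (rule quad_neg[of "\<theta> i - \<alpha>" A])
        show "\<forall>e. 0 < e \<and> e \<le> \<theta> i - \<alpha> \<longrightarrow> 0 \<le> e * - g + A * e\<^sup>2"
        proof safe
          fix e assume "0 < e" "e \<le> \<theta> i - \<alpha>"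
          have "0 \<le> (-e) * g + A * (-e)^2" by (rule key) (use \<open>0 < e\<close> \<open>e \<le> \<theta> i - \<alpha>\<close> bi in auto)
          thus "0 \<le> e * - g + A * e\<^sup>2" by simp
        qed
      qed (use \<open>\<alpha> < \<theta> i\<close> A0 in auto)
      thus False using \<open>u < 0\<close> ug by simp
    qed
  qed
qed


lemma phi_facts:
  fixes \<phi> :: "real \<Rightarrow> real"
  assumes subl: "sublinear \<phi>" and conj: "\<forall>s. fconj \<phi> s = iota_interval \<alpha> \<beta> s" and ab: "\<alpha> < \<beta>"
  shows "\<forall>th u. \<alpha> \<le> th \<and> th \<le> \<beta> \<longrightarrow> th * u \<le> \<phi> u"
    and "\<forall>u. u \<ge> 0 \<longrightarrow> \<phi> u = \<beta> * u"
    and "\<forall>u. u \<le> 0 \<longrightarrow> \<phi> u = \<alpha> * u"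
proof -
  have hom: "\<And>t x. t > 0 \<Longrightarrow> \<phi> (t * x) = t * \<phi> x" using subl by (auto simp: sublinear_def)
  show bnd: "\<forall>th u. \<alpha> \<le> th \<and> th \<le> \<beta> \<longrightarrow> th * u \<le> \<phi> u"
  proof safe
    fix th u assume "\<alpha> \<le> th" "th \<le> \<beta>"
    hence "fconj \<phi> th = 0" using conj by (simp add: iota_interval_def)
    hence "ereal (th * u - \<phi> u) \<le> 0" unfolding fconj_def by (metis SUP_upper UNIV_I)
    thus "th * u \<le> \<phi> u" by simp
  qed
  have p0: "\<phi> 0 = 0" using hom[of 2 0] by simp
  have p1: "\<phi> 1 \<ge> \<beta>" using bnd ab by (metis less_imp_le mult.right_neutral order_refl)
  have pm1: "\<phi> (-1) \<ge> -\<alpha>" using bnd[rule_format, of \<alpha> "-1"] ab by simp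
  have pos: "\<phi> t = t * \<phi> 1" if "t > 0" for t using hom[OF that, of 1] by simp
  have neg: "\<phi> t = (-t) * \<phi> (-1)" if "t < 0" for t using hom[of "-t" "-1"] that by simp
  have noinf: False if "\<not> (\<alpha> \<le> s \<and> s \<le> \<beta>)" "\<And>t. s * t \<le> \<phi> t" for s
  proof -
    have "fconj \<phi> s = \<infinity>" using conj that(1) by (simp add: iota_interval_def)
    moreover have "fconj \<phi> s \<le> 0" unfolding fconj_def
      by (rule SUP_least) (use that(2) in \<open>simp add: algebra_simps\<close>)
    ultimately show False by simp
  qed
  have q1: "\<phi> 1 \<le> \<beta>"
  proof (rule ccontr)
    assume "\<not> \<phi> 1 \<le> \<beta>"
    define s where "s = (\<beta> + \<phi> 1) / 2"
    have s: "\<beta> < s" "s < \<phi> 1" using \<open>\<not> \<phi> 1 \<le> \<beta>\<close> by (auto simp: s_def)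
    show False
    proof (rule noinf[of s])
      show "\<not> (\<alpha> \<le> s \<and> s \<le> \<beta>)" using s by simp
      fix t :: real
      consider "t > 0" | "t = 0" | "t < 0" by linarith
      thus "s * t \<le> \<phi> t"
      proof cases
        case 1 thus ?thesis using pos[OF 1] s by (simp add: mult.commute mult_left_mono)
      next
        case 2 thus ?thesis using p0 by simp
      next
        case 3
        have "s * t \<le> \<alpha> * t" using 3 s ab by (simp add: mult_right_mono_neg)
        also have "\<alpha> * t = (-t) * (-\<alpha>)" by simp
        also have "\<dots> \<le> (-t) * \<phi> (-1)" using 3 pm1 by (intro mult_left_mono) auto
        finally show ?thesis using neg[OF 3] by simp
      qed
    qed
  qed
  have qm1: "\<phi> (-1) \<le> -\<alpha>"
  proof (rule ccontr)
    assume "\<not> \<phi> (-1) \<le> -\<alpha>"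
    define s where "s = (\<alpha> - \<phi> (-1)) / 2"
    have s: "s < \<alpha>" "- \<phi> (-1) < s" using \<open>\<not> \<phi> (-1) \<le> -\<alpha>\<close> by (auto simp: s_def)
    show False
    proof (rule noinf[of s])
      show "\<not> (\<alpha> \<le> s \<and> s \<le> \<beta>)" using s by simp
      fix t :: real
      consider "t > 0" | "t = 0" | "t < 0" by linarith
      thus "s * t \<le> \<phi> t"
      proof cases
        case 1
        have "s * t \<le> \<beta> * t" using 1 s ab by (intro mult_right_mono) auto
        also have "\<dots> \<le> t * \<phi> 1" using 1 p1 by (simp add: mult.commute mult_left_mono)
        finally show ?thesis using pos[OF 1] by simp
      next
        case 2 thus ?thesis using p0 by simp
      next
        case 3
        have "s * t = (-t) * (-s)" by simp
        also have "\<dots> \<le> (-t) * \<phi> (-1)" using 3 s by (intro mult_left_mono) auto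
        finally show ?thesis using neg[OF 3] by simp
      qed
    qed
  qed
  show "\<forall>u. u \<ge> 0 \<longrightarrow> \<phi> u = \<beta> * u"
  proof safe
    fix u :: real assume "u \<ge> 0"
    thus "\<phi> u = \<beta> * u" using pos[of u] p1 q1 p0 by (cases "u = 0") auto
  qed
  show "\<forall>u. u \<le> 0 \<longrightarrow> \<phi> u = \<alpha> * u"
  proof safe
    fix u :: real assume "u \<le> 0"
    have e: "\<phi> (-1) = -\<alpha>" using pm1 qm1 by linarith
    show "\<phi> u = \<alpha> * u" using neg[of u] e p0 \<open>u \<le> 0\<close> by (cases "u = 0") auto
  qed
qed


lemma lin: "(\<Sum>i\<in>UNIV. \<theta> i * (v \<bullet> (a i *\<^sub>R x i) + b i * y i)) = v \<bullet> ZT a x \<theta> + (\<Sum>i\<in>UNIV. b i * y i * \<theta> i)"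
  unfolding ZT_def inner_sum_right inner_scaleR_right
  by (simp add: sum.distrib algebra_simps)

lemma quad_id:
  fixes v \<eta> :: "real^'n"
  shows "(1/2) * (norm v)^2 + C * (v \<bullet> \<eta>) = (1/2) * (norm (- C *\<^sub>R \<eta>))^2 + C * ((- C *\<^sub>R \<eta>) \<bullet> \<eta>) + (1/2) * (norm (v - (- C *\<^sub>R \<eta>)))^2"
proof -
  have f1: "(norm (v - (- C *\<^sub>R \<eta>)))^2 = (norm v)^2 + 2 * C * (v \<bullet> \<eta>) + C^2 * (norm \<eta>)^2"
    unfolding power2_norm_eq_inner
    by (simp add: inner_add_left inner_add_right inner_commute[of \<eta> v] power2_eq_square distrib_left)
  have f2: "(norm (- C *\<^sub>R \<eta>))^2 = C^2 * (norm \<eta>)^2" by (simp add: power_mult_distrib power2_abs)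
  have f3: "(- C *\<^sub>R \<eta>) \<bullet> \<eta> = - C * (norm \<eta>)^2" by (simp add: power2_norm_eq_inner)
  show ?thesis unfolding f1 f2 f3 by (simp add: algebra_simps power2_eq_square)
qed

lemma comp_slack:
  fixes \<phi> :: "real \<Rightarrow> real"
  assumes ph: "\<forall>u. u \<ge> 0 \<longrightarrow> \<phi> u = \<beta> * u" and nh: "\<forall>u. u \<le> 0 \<longrightarrow> \<phi> u = \<alpha> * u"
    and dopt: "dual_opt \<alpha> \<beta> a x b y C \<theta>" and C: "C > 0"
  shows "\<phi> ((- C *\<^sub>R ZT a x \<theta>) \<bullet> (a i *\<^sub>R x i) + b i * y i) = \<theta> i * ((- C *\<^sub>R ZT a x \<theta>) \<bullet> (a i *\<^sub>R x i) + b i * y i)"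
proof -
  define u where "u = (- C *\<^sub>R ZT a x \<theta>) \<bullet> (a i *\<^sub>R x i) + b i * y i"
  have k: "(u > 0 \<longrightarrow> \<theta> i = \<beta>) \<and> (u < 0 \<longrightarrow> \<theta> i = \<alpha>)"
    using kkt_coord[OF dopt C, of i] by (simp add: u_def)
  have "\<phi> u = \<theta> i * u"
  proof (cases "u > 0")
    case True thus ?thesis using k ph by (simp add: mult.commute)
  next
    case False
    show ?thesis
    proof (cases "u = 0")
      case True thus ?thesis using ph by simp
    next
      case False thus ?thesis using \<open>\<not> u > 0\<close> k nh by (simp add: mult.commute)
    qed
  qed
  thus ?thesis by (simp add: u_def)
qed

lemma W_eq:
  fixes \<phi> :: "real \<Rightarrow> real"
  assumes bnd: "\<forall>th u. \<alpha> \<le> th \<and> th \<le> \<beta> \<longrightarrow> th * u \<le> \<phi> u"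
    and ph: "\<forall>u. u \<ge> 0 \<longrightarrow> \<phi> u = \<beta> * u" and nh: "\<forall>u. u \<le> 0 \<longrightarrow> \<phi> u = \<alpha> * u"
    and dopt: "dual_opt \<alpha> \<beta> a x b y C \<theta>" and C: "C > 0"
    and popt: "primal_opt \<phi> a x b y C w"
  shows "w = - C *\<^sub>R ZT a x \<theta>"
proof -
  define \<eta> where "\<eta> = ZT a x \<theta>"
  define w0 where "w0 = - C *\<^sub>R \<eta>"
  define S where "S = (\<Sum>i\<in>UNIV. b i * y i * \<theta> i)"
  define F where "F v = (1/2) * (norm v)^2 + C * (v \<bullet> \<eta> + S)" for v
  have box: "\<forall>j. \<alpha> \<le> \<theta> j \<and> \<theta> j \<le> \<beta>" using dopt by (simp add: dual_opt_def)
  have PF: "primal_obj \<phi> a x b y C v \<ge> F v" for v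
  proof -
    have "(\<Sum>i\<in>UNIV. \<theta> i * (v \<bullet> (a i *\<^sub>R x i) + b i * y i)) \<le> (\<Sum>i\<in>UNIV. \<phi> (v \<bullet> (a i *\<^sub>R x i) + b i * y i))"
      by (rule sum_mono) (use bnd box in blast)
    hence "C * (v \<bullet> \<eta> + S) \<le> C * (\<Sum>i\<in>UNIV. \<phi> (v \<bullet> (a i *\<^sub>R x i) + b i * y i))"
      using C unfolding lin \<eta>_def S_def by (simp add: mult_left_mono)
    thus ?thesis unfolding F_def primal_obj_def by simp
  qed
  have eq0: "\<phi> (w0 \<bullet> (a i *\<^sub>R x i) + b i * y i) = \<theta> i * (w0 \<bullet> (a i *\<^sub>R x i) + b i * y i)" for i
  proof -
    define u where "u = w0 \<bullet> (a i *\<^sub>R x i) + b i * y i"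
    have k: "(u > 0 \<longrightarrow> \<theta> i = \<beta>) \<and> (u < 0 \<longrightarrow> \<theta> i = \<alpha>)"
      using kkt_coord[OF dopt C, of i] by (simp add: u_def w0_def \<eta>_def)
    have "\<phi> u = \<theta> i * u"
    proof (cases "u > 0")
      case True thus ?thesis using k ph by (simp add: mult.commute)
    next
      case False
      show ?thesis
      proof (cases "u = 0")
        case True thus ?thesis using ph by simp
      next
        case False thus ?thesis using \<open>\<not> u > 0\<close> k nh by (simp add: mult.commute)
      qed
    qed
    thus ?thesis by (simp add: u_def)
  qed
  have Pw0: "primal_obj \<phi> a x b y C w0 = F w0"
    unfolding primal_obj_def F_def eq0 lin \<eta>_def S_def by simp
  have Fid: "F v = F w0 + (1/2) * (norm (v - w0))^2" for v
    using quad_id[of v C \<eta>] unfolding F_def w0_def by (simp add: algebra_simps)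
  have "primal_obj \<phi> a x b y C w \<le> primal_obj \<phi> a x b y C w0" using popt by (simp add: primal_opt_def)
  also have "\<dots> = F w - (1/2) * (norm (w - w0))^2" using Pw0 Fid[of w] by simp
  also have "\<dots> \<le> primal_obj \<phi> a x b y C w - (1/2) * (norm (w - w0))^2" using PF[of w] by simp
  finally have "(norm (w - w0))^2 \<le> 0" by simp
  hence "w - w0 = 0" by simp
  hence "w = w0" by (simp only: right_minus_eq)
  thus ?thesis unfolding w0_def \<eta>_def .
qed


lemma nexp: fixes w1 w2 :: "real^'n"
  shows "(norm (w2 - m *\<^sub>R w1))^2 = w2 \<bullet> w2 - 2 * m * (w1 \<bullet> w2) + m^2 * (w1 \<bullet> w1)"
proof -
  have "(norm (w2 - m *\<^sub>R w1))^2 = (w2 - m *\<^sub>R w1) \<bullet> (w2 - m *\<^sub>R w1)" by (rule power2_norm_eq_inner)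
  also have "\<dots> = w2 \<bullet> w2 - m * (w2 \<bullet> w1) - m * (w1 \<bullet> w2) + m * m * (w1 \<bullet> w1)"
    by (simp only: inner_diff_left inner_diff_right inner_scaleR_left inner_scaleR_right) (simp add: algebra_simps)
  also have "\<dots> = w2 \<bullet> w2 - 2 * m * (w1 \<bullet> w2) + m^2 * (w1 \<bullet> w1)"
    by (simp add: inner_commute[of w2 w1] power2_eq_square)
  finally show ?thesis .
qed

lemma mu_id: "t - 2 * ((1 + c) / 2) * q + ((1 + c) / 2)^2 * p - ((c - 1) / 2)^2 * p = t - (1 + c) * q + (c::real) * p"
  by (simp add: power2_eq_square algebra_simps add_divide_distrib diff_divide_distrib)

lemma Cs_ge:
  fixes Cs :: "nat \<Rightarrow> real"
  assumes C_incr: "\<forall>j. 1 \<le> j \<and> j < K \<longrightarrow> Cs j < Cs (Suc j)"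
  shows "1 \<le> j \<Longrightarrow> j \<le> K \<Longrightarrow> Cs 1 \<le> Cs j"
proof (induction j)
  case 0 then show ?case by simp
next
  case (Suc n)
  show ?case
  proof (cases "n = 0")
    case True thus ?thesis by simp
  next
    case False
    hence n1: "1 \<le> n" by simp
    have nK: "n < K" using Suc.prems by simp
    have "Cs 1 \<le> Cs n" using Suc.IH n1 nK by simp
    moreover have "Cs n < Cs (Suc n)" using C_incr n1 nK by blast
    ultimately show ?thesis by simp
  qed
qed

theorem corollary2:
  fixes \<phi> :: "real \<Rightarrow> real" and \<alpha> \<beta> :: real
    and x :: "'l::finite \<Rightarrow> real^'n" and y a b :: "'l \<Rightarrow> real"
    and W :: "real \<Rightarrow> real^'n" and \<Theta> :: "real \<Rightarrow> 'l \<Rightarrow> real"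
    and Cs :: "nat \<Rightarrow> real" and K k :: nat and i :: 'l
  assumes nonneg: "\<forall>t. \<phi> t \<ge> 0"
    and nonconst: "\<exists>s t. \<phi> s \<noteq> \<phi> t"
    and cont: "continuous_on UNIV \<phi>"
    and subl: "sublinear \<phi>"
    and conj: "\<forall>s. fconj \<phi> s = iota_interval \<alpha> \<beta> s"
    and ab: "\<alpha> < \<beta>"
    and W_opt: "\<forall>C>0. primal_opt \<phi> a x b y C (W C)"
    and Theta_opt: "\<forall>C>0. dual_opt \<alpha> \<beta> a x b y C (\<Theta> C)"
    and C_pos: "0 < Cs 1"
    and C_incr: "\<forall>j. 1 \<le> j \<and> j < K \<longrightarrow> Cs j < Cs (Suc j)"
    and k: "1 \<le> k" "k < K"
  shows
    "(- ((Cs k + Cs (Suc k)) / (2 * Cs k)) * (W (Cs k) \<bullet> (a i *\<^sub>R x i))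
        - ((Cs (Suc k) - Cs k) / (2 * Cs k)) * norm (W (Cs k)) * norm (a i *\<^sub>R x i) > b i * y i
      \<longrightarrow> \<Theta> (Cs (Suc k)) i = \<alpha> \<and> i \<in> idx_R a x b y (W (Cs (Suc k))))
   \<and> (- ((Cs k + Cs (Suc k)) / (2 * Cs k)) * (W (Cs k) \<bullet> (a i *\<^sub>R x i))
        + ((Cs (Suc k) - Cs k) / (2 * Cs k)) * norm (W (Cs k)) * norm (a i *\<^sub>R x i) < b i * y i
      \<longrightarrow> \<Theta> (Cs (Suc k)) i = \<beta> \<and> i \<in> idx_L a x b y (W (Cs (Suc k))))"
proof -
  note pf = phi_facts[OF subl conj ab]
  define C1 where "C1 = Cs k"
  define C2 where "C2 = Cs (Suc k)"
  have C1: "C1 > 0" using Cs_ge[OF C_incr k(1)] k C_pos unfolding C1_def by force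
  have C12: "C1 < C2" using C_incr k unfolding C1_def C2_def by auto
  have C2: "C2 > 0" using C1 C12 by simp
  define \<theta>1 where "\<theta>1 = \<Theta> C1"
  define \<theta>2 where "\<theta>2 = \<Theta> C2"
  define w1 where "w1 = W C1"
  define w2 where "w2 = W C2"
  have d1: "dual_opt \<alpha> \<beta> a x b y C1 \<theta>1" using Theta_opt C1 by (simp add: \<theta>1_def)
  have d2: "dual_opt \<alpha> \<beta> a x b y C2 \<theta>2" using Theta_opt C2 by (simp add: \<theta>2_def)
  have w1e: "w1 = - C1 *\<^sub>R ZT a x \<theta>1"
    using W_eq[OF pf d1 C1] W_opt C1 by (simp add: w1_def)
  have w2e: "w2 = - C2 *\<^sub>R ZT a x \<theta>2"
    using W_eq[OF pf d2 C2] W_opt C2 by (simp add: w2_def)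
  define z where "z = a i *\<^sub>R x i"
  define S1 where "S1 = (\<Sum>j\<in>UNIV. b j * y j * \<theta>1 j)"
  define S2 where "S2 = (\<Sum>j\<in>UNIV. b j * y j * \<theta>2 j)"
  define \<eta>1 where "\<eta>1 = ZT a x \<theta>1"
  define \<eta>2 where "\<eta>2 = ZT a x \<theta>2"
  have box1: "\<forall>j. \<alpha> \<le> \<theta>1 j \<and> \<theta>1 j \<le> \<beta>" using d1 by (simp add: dual_opt_def)
  have box2: "\<forall>j. \<alpha> \<le> \<theta>2 j \<and> \<theta>2 j \<le> \<beta>" using d2 by (simp add: dual_opt_def)
  have ineq1: "w1 \<bullet> \<eta>2 + S2 \<le> w1 \<bullet> \<eta>1 + S1"
  proof -
    have "(\<Sum>j\<in>UNIV. \<theta>2 j * (w1 \<bullet> (a j *\<^sub>R x j) + b j * y j)) \<le> (\<Sum>j\<in>UNIV. \<phi> (w1 \<bullet> (a j *\<^sub>R x j) + b j * y j))"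
      by (rule sum_mono) (use pf(1) box2 in blast)
    also have "\<dots> = (\<Sum>j\<in>UNIV. \<theta>1 j * (w1 \<bullet> (a j *\<^sub>R x j) + b j * y j))"
      unfolding w1e by (rule sum.cong[OF refl], rule comp_slack[OF pf(2,3) d1 C1])
    finally show ?thesis unfolding lin \<eta>1_def \<eta>2_def S1_def S2_def .
  qed
  have ineq2: "w2 \<bullet> \<eta>1 + S1 \<le> w2 \<bullet> \<eta>2 + S2"
  proof -
    have "(\<Sum>j\<in>UNIV. \<theta>1 j * (w2 \<bullet> (a j *\<^sub>R x j) + b j * y j)) \<le> (\<Sum>j\<in>UNIV. \<phi> (w2 \<bullet> (a j *\<^sub>R x j) + b j * y j))"
      by (rule sum_mono) (use pf(1) box1 in blast)
    also have "\<dots> = (\<Sum>j\<in>UNIV. \<theta>2 j * (w2 \<bullet> (a j *\<^sub>R x j) + b j * y j))"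
      unfolding w2e by (rule sum.cong[OF refl], rule comp_slack[OF pf(2,3) d2 C2])
    finally show ?thesis unfolding lin \<eta>1_def \<eta>2_def S1_def S2_def .
  qed
  have e1: "\<eta>1 = (- 1 / C1) *\<^sub>R w1" using w1e C1 by (simp add: \<eta>1_def)
  have e2: "\<eta>2 = (- 1 / C2) *\<^sub>R w2" using w2e C2 by (simp add: \<eta>2_def)
  define p where "p = w1 \<bullet> w1"
  define q where "q = w1 \<bullet> w2"
  define t where "t = w2 \<bullet> w2"
  have "w1 \<bullet> \<eta>2 - w1 \<bullet> \<eta>1 - w2 \<bullet> \<eta>2 + w2 \<bullet> \<eta>1 \<le> 0" using ineq1 ineq2 by linarith
  hence pqt: "- q / C2 + p / C1 + t / C2 - q / C1 \<le> 0"
    unfolding e1 e2 p_def q_def t_def by (simp add: inner_commute[of w2 w1])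
  define c where "c = C2 / C1"
  define \<mu> where "\<mu> = (C1 + C2) / (2 * C1)"
  define r where "r = (C2 - C1) / (2 * C1)"
  have r0: "r \<ge> 0" using C1 C12 by (simp add: r_def)
  have pqt2: "t - (1 + c) * q + c * p \<le> 0"
  proof -
    have A: "C1 * C2 * (- q / C2 + p / C1 + t / C2 - q / C1) = C1 * t - (C1 + C2) * q + C2 * p"
      using C1 C2 by (simp add: field_simps)
    have "C1 * C2 * (- q / C2 + p / C1 + t / C2 - q / C1) \<le> 0"
      using pqt C1 C2 by (intro mult_nonneg_nonpos) auto
    hence B: "C1 * t - (C1 + C2) * q + C2 * p \<le> 0" using A by simp
    have "t - (1 + c) * q + c * p = (C1 * t - (C1 + C2) * q + C2 * p) / C1"
      using C1 by (simp add: c_def field_simps)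
    thus ?thesis using B C1 by (simp add: divide_nonpos_pos)
  qed
  have mu: "\<mu> = (1 + c) / 2" using C1 by (simp add: \<mu>_def c_def field_simps)
  have rc: "r = (c - 1) / 2" using C1 by (simp add: r_def c_def field_simps)
  have "(norm (w2 - \<mu> *\<^sub>R w1))^2 = t - 2 * \<mu> * q + \<mu>^2 * p"
    unfolding p_def q_def t_def by (rule nexp)
  also have "\<dots> \<le> r^2 * p"
  proof -
    have "t - 2 * \<mu> * q + \<mu>^2 * p - r^2 * p = t - (1 + c) * q + c * p"
      unfolding mu rc by (rule mu_id)
    thus ?thesis using pqt2 by linarith
  qed
  also have "\<dots> = (r * norm w1)^2" unfolding p_def power_mult_distrib power2_norm_eq_inner ..
  finally have sq: "(norm (w2 - \<mu> *\<^sub>R w1))^2 \<le> (r * norm w1)^2" .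
  have rn: "0 \<le> r * norm w1" using r0 by simp
  have nb: "norm (w2 - \<mu> *\<^sub>R w1) \<le> r * norm w1" by (rule power2_le_imp_le[OF sq rn])
  have "\<bar>(w2 - \<mu> *\<^sub>R w1) \<bullet> z\<bar> \<le> norm (w2 - \<mu> *\<^sub>R w1) * norm z" by (rule Cauchy_Schwarz_ineq2)
  also have "\<dots> \<le> r * norm w1 * norm z" using nb by (intro mult_right_mono) (simp_all add: norm_ge_zero)
  finally have cs: "\<bar>(w2 - \<mu> *\<^sub>R w1) \<bullet> z\<bar> \<le> r * norm w1 * norm z" .
  have split: "w2 \<bullet> z = \<mu> * (w1 \<bullet> z) + (w2 - \<mu> *\<^sub>R w1) \<bullet> z" by (simp add: inner_diff_left)
  have kk: "(w2 \<bullet> z + b i * y i > 0 \<longrightarrow> \<theta>2 i = \<beta>) \<and> (w2 \<bullet> z + b i * y i < 0 \<longrightarrow> \<theta>2 i = \<alpha>)"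
    using kkt_coord[OF d2 C2, of i] by (simp add: w2e z_def)
  show ?thesis
  proof (intro conjI impI)
    assume h: "- ((Cs k + Cs (Suc k)) / (2 * Cs k)) * (W (Cs k) \<bullet> (a i *\<^sub>R x i))
        - ((Cs (Suc k) - Cs k) / (2 * Cs k)) * norm (W (Cs k)) * norm (a i *\<^sub>R x i) > b i * y i"
    hence "- \<mu> * (w1 \<bullet> z) - r * norm w1 * norm z > b i * y i"
      by (simp add: \<mu>_def r_def C1_def C2_def w1_def z_def)
    hence neg: "- (w2 \<bullet> z) > b i * y i" using split cs by linarith
    thus "\<Theta> (Cs (Suc k)) i = \<alpha>" using kk by (simp add: \<theta>2_def C2_def)
    show "i \<in> idx_R a x b y (W (Cs (Suc k)))" using neg by (simp add: idx_R_def w2_def C2_def z_def)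
  next
    assume h: "- ((Cs k + Cs (Suc k)) / (2 * Cs k)) * (W (Cs k) \<bullet> (a i *\<^sub>R x i))
        + ((Cs (Suc k) - Cs k) / (2 * Cs k)) * norm (W (Cs k)) * norm (a i *\<^sub>R x i) < b i * y i"
    hence "- \<mu> * (w1 \<bullet> z) + r * norm w1 * norm z < b i * y i"
      by (simp add: \<mu>_def r_def C1_def C2_def w1_def z_def)
    hence pos: "- (w2 \<bullet> z) < b i * y i" using split cs by linarith
    thus "\<Theta> (Cs (Suc k)) i = \<beta>" using kk by (simp add: \<theta>2_def C2_def)
    show "i \<in> idx_L a x b y (W (Cs (Suc k)))" using pos by (simp add: idx_L_def w2_def C2_def z_def)
  qed
qed

end
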